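(* Let $\phi_1,\phi_2:\mathbb{R}\to\mathbb{R}$ be functions of extended class $\mathcal{K}_\infty$ satisfying $$\phi_1\circ\phi_2(r)>r\ \ \forall r<0,\qquad \phi_1\circ\phi_2(r)<r\ \ \forall r>0.$$ Then there exists a function $\phi$ of extended class $\mathcal{K}_\infty$ such that (1) $\phi_1^{-1}(r)<\phi(r)<\phi_2(r)$ for all $r<0$, and $\phi_2(r)<\phi(r)<\phi_1^{-1}(r)$ for all $r>0$; (2) $\phi$ is continuously differentiable on $\mathbb{R}\setminus\{0\}$ and $\phi'(r)>0$ for all $r\in\mathbb{R}\setminus\{0\}$.
   Context: A continuous function $\phi:\mathbb{R}\to\mathbb{R}$ with $\phi(0)=0$ is of extended class $\mathcal{K}_\infty$ if it is strictly increasing and unbounded above and below (hence a bijection of $\mathbb{R}$, with inverse $\phi^{-1}$ also of extended class $\mathcal{K}_\infty$). $\circ$ denotes composition. *)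

theory Defs
  imports "HOL-Analysis.Analysis"
begin

definition ext_class_K_inf :: "(real \<Rightarrow> real) \<Rightarrow> bool" where
  "ext_class_K_inf \<phi> \<longleftrightarrow> continuous_on UNIV \<phi> \<and> \<phi> 0 = 0 \<and> strict_mono \<phi> \<and>
     (\<forall>M. \<exists>r. \<phi> r > M) \<and> (\<forall>M. \<exists>r. \<phi> r < M)"

end

theory Submission imports Defs begin
lemma prim_pos:
  fixes f :: "real \<Rightarrow> real"
  assumes "\<And>x. 0 < x \<Longrightarrow> isCont f x"
  shows "\<exists>F. \<forall>x>0. (F has_real_derivative f x) (at x)"
proof -
  have "\<exists>F. \<forall>x :: real. ereal 0 < x \<longrightarrow> x < \<infinity> \<longrightarrow> (F has_vector_derivative f x) (at x)"
    by (rule einterval_antiderivative) (auto intro: assms)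
  then show ?thesis by (auto simp: has_real_derivative_iff_has_vector_derivative)
qed

lemma prim_all:
  fixes f :: "real \<Rightarrow> real"
  assumes "\<And>x. isCont f x"
  shows "\<exists>F. \<forall>x. (F has_real_derivative f x) (at x)"
proof -
  have "\<exists>F. \<forall>x :: real. -\<infinity> < x \<longrightarrow> x < \<infinity> \<longrightarrow> (F has_vector_derivative f x) (at x)"
    by (rule einterval_antiderivative) (auto intro: assms)
  then show ?thesis by (auto simp: has_real_derivative_iff_has_vector_derivative)
qed

lemma core:
  fixes L U i :: "real \<Rightarrow> real"
  assumes cL: "\<And>x. isCont L x" and mL: "strict_mono L"
    and ci: "\<And>x. isCont i x" and mi: "strict_mono i" and i0: "i 0 = 0" and si: "surj i"
    and ilt: "\<And>t. 0 < t \<Longrightarrow> i t < t"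
    and key: "\<And>r t. 0 < r \<Longrightarrow> 0 < t \<Longrightarrow> i t \<le> r \<Longrightarrow> L t \<le> U r"
  shows "\<exists>\<psi> \<psi>'. \<forall>r>0. L r < \<psi> r \<and> \<psi> r < U r \<and> (\<psi> has_real_derivative \<psi>' r) (at r)
           \<and> \<psi>' r > 0 \<and> isCont \<psi>' r"
proof -
  define j where "j = inv i"
  have ij: "i (j s) = s" for s unfolding j_def using si by (simp add: surj_f_inv_f)
  have ji: "j (i t) = t" for t unfolding j_def using mi by (simp add: strict_mono_imp_inj_on)
  have imono: "i a < i b \<longleftrightarrow> a < b" for a b using mi by (simp add: strict_mono_less)
  have imono': "i a \<le> i b \<longleftrightarrow> a \<le> b" for a b using mi by (simp add: strict_mono_less_eq)
  have ipos: "0 < i t" if "0 < t" for t using imono[of 0 t] that i0 by simp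
  have jgt: "s < j s" if "0 < s" for s
  proof (rule ccontr)
    assume "\<not> s < j s"
    then have "i (j s) \<le> i s" using imono' by simp
    then show False using ij[of s] ilt[OF that] by simp
  qed
  have cj: "isCont j s" for s
  proof -
    have "isCont j (i (j s))"
      by (rule isCont_inverse_function[where d=1]) (auto simp: ji ci)
    then show ?thesis by (simp add: ij)
  qed
  define c where "c s = (s + j s) / 2" for s
  define w where "w s = min (s - i (c s)) (c s - s) / 2" for s
  define \<sigma> where "\<sigma> s = 1 / w s + 1 + 1 / s^2" for s
  have wpos: "0 < w s" if "0 < s" for s
  proof -
    have "c s < j s" "s < c s" using jgt[OF that] by (auto simp: c_def)
    then have "i (c s) < s" using imono[of "c s" "j s"] ij by simp
    then show ?thesis using \<open>s < c s\<close> by (simp add: w_def)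
  qed
  have wbound: "w s \<le> (t - i t) / 2" if "0 < t" "i t \<le> s" "s \<le> t" for s t
  proof (cases "t \<le> c s")
    case True
    then have "i t \<le> i (c s)" using imono' by simp
    then show ?thesis using that by (simp add: w_def)
  next
    case False
    then show ?thesis using that by (simp add: w_def)
  qed
  have csig: "isCont \<sigma> s" if "0 < s" for s
  proof -
    have cc: "isCont (\<lambda>s. c s) s" unfolding c_def by (intro continuous_intros cj) simp
    have ic: "isCont (\<lambda>s. i (c s)) s" using cc ci by (simp add: isCont_o2)
    have "isCont w s" unfolding w_def using cc ic
      by (intro continuous_intros) auto
    then show ?thesis unfolding \<sigma>_def using wpos[OF that] that
      by (intro continuous_intros) auto
  qed
  have sigge: "\<sigma> s \<ge> 1 / w s" "\<sigma> s \<ge> 1" "\<sigma> s \<ge> 1 / s^2" if "0 < s" for s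
    using wpos[OF that] that by (auto simp: \<sigma>_def)
  have sigpos: "0 < \<sigma> s" if "0 < s" for s using sigge(2)[OF that] by simp
  obtain S where S: "\<And>x. 0 < x \<Longrightarrow> (S has_real_derivative \<sigma> x) (at x)"
    using prim_pos[of \<sigma>] csig by blast
  have Smono: "S a < S b" if "0 < a" "a < b" for a b
    using that by (intro DERIV_pos_imp_increasing[OF \<open>a<b\<close>]) (meson S sigpos less_le_trans)
  have Smono': "S a < S b \<longleftrightarrow> a < b" if "0 < a" "0 < b" for a b
    using Smono[of a b] Smono[of b a] that by (cases a b rule: linorder_cases) auto
  have Scont: "isCont S x" if "0 < x" for x using S[OF that] by (rule DERIV_isCont)
  have Sgap: "S t - S (i t) \<ge> 2" if t0: "0 < t" for t
  proof -
    obtain z where z: "i t < z" "z < t" "S t - S (i t) = (t - i t) * \<sigma> z"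
      using MVT2[of "i t" t S \<sigma>] ilt[OF t0] ipos[OF t0] S by force
    have "w z \<le> (t - i t) / 2" using wbound[of t z] z t0 by simp
    moreover have "0 < w z" using wpos z ipos[OF t0] by simp
    ultimately have "2 / (t - i t) \<le> 1 / w z"
      using ilt[OF t0] by (simp add: field_simps)
    also have "\<dots> \<le> \<sigma> z" using sigge z ipos[OF t0] by simp
    finally have "2 / (t - i t) \<le> \<sigma> z" .
    then have "(t - i t) * (2 / (t - i t)) \<le> (t - i t) * \<sigma> z"
      using ilt[OF t0] by (intro mult_left_mono) auto
    moreover have "(t - i t) * (2 / (t - i t)) = 2" using ilt[OF t0] by (simp add: divide_simps)
    ultimately show ?thesis using z by linarith
  qed
  have Sonto: "\<exists>r>0. S r = u" for u
  proof -
    define r1 where "r1 = max 1 (u - S 1 + 1)"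
    have "S r1 \<ge> u"
    proof (cases "r1 = 1")
      case True then show ?thesis by (simp add: r1_def)
    next
      case False
      then have "1 < r1" by (simp add: r1_def)
      then obtain z where z: "1 < z" "z < r1" "S r1 - S 1 = (r1 - 1) * \<sigma> z"
        using MVT2[of 1 r1 S \<sigma>] S by force
      have "(r1 - 1) * 1 \<le> (r1 - 1) * \<sigma> z" using sigge(2)[of z] z by (intro mult_left_mono) auto
      then show ?thesis using z by (simp add: r1_def)
    qed
    define K where "K = \<bar>S 1 - u\<bar> + 1"
    have A1: "1 \<le> K" unfolding K_def by simp
    define r0 where "r0 = 1 / (4 * K)"
    have r0pos: "0 < r0" unfolding r0_def using A1 by simp
    have r0le: "r0 \<le> 1/4" unfolding r0_def using A1 by (simp add: divide_simps)
    have "S r0 \<le> u"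
    proof -
      obtain z where z: "r0 < z" "z < 2*r0" "S (2*r0) - S r0 = (2*r0 - r0) * \<sigma> z"
        using MVT2[of r0 "2*r0" S \<sigma>] S r0pos by force
      have "1 / z^2 \<ge> 1 / (2*r0)^2" using z r0pos
        by (intro divide_left_mono power_mono) auto
      then have "\<sigma> z \<ge> 1 / (4 * r0^2)" using sigge(3)[of z] z r0pos by (simp add: power_mult_distrib)
      then have "r0 * \<sigma> z \<ge> r0 * (1 / (4 * r0^2))" using r0pos by (intro mult_left_mono) auto
      also have "r0 * (1 / (4 * r0^2)) = 1 / (4 * r0)" using r0pos by (simp add: power2_eq_square field_simps)
      also have "\<dots> = K" using A1 by (simp add: r0_def)
      finally have A: "S (2*r0) - S r0 \<ge> K" using z by simp
      have "S (2*r0) < S 1" using Smono[of "2*r0" 1] r0pos r0le by simp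
      then show ?thesis using A by (simp add: K_def)
    qed
    have "r0 \<le> r1" using r0le by (simp add: r1_def)
    moreover have "\<forall>x. r0 \<le> x \<and> x \<le> r1 \<longrightarrow> isCont S x" using r0pos Scont by auto
    ultimately obtain r where "r0 \<le> r" "r \<le> r1" "S r = u"
      using IVT[of S r0 u r1] \<open>S r0 \<le> u\<close> \<open>S r1 \<ge> u\<close> by blast
    then show ?thesis using r0pos by (intro exI[of _ r]) auto
  qed
  define Q where "Q u = (SOME r. 0 < r \<and> S r = u)" for u
  have Q: "0 < Q u \<and> S (Q u) = u" for u unfolding Q_def using someI_ex[OF Sonto[of u]] .
  have QS: "Q (S r) = r" if r: "0 < r" for r
  proof (rule ccontr)
    assume ne: "Q (S r) \<noteq> r"
    have q1: "S (Q (S r)) = S r" and q2: "0 < Q (S r)" using Q[of "S r"] by auto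
    from ne have "Q (S r) < r \<or> r < Q (S r)" by linarith
    then show False
    proof
      assume "Q (S r) < r" then have "S (Q (S r)) < S r" using Smono q2 by blast
      then show False using q1 by simp
    next
      assume "r < Q (S r)" then have "S r < S (Q (S r))" using Smono r by blast
      then show False using q1 by simp
    qed
  qed
  have Qmono: "Q a < Q b" if ab: "a < b" for a b
  proof (rule ccontr)
    assume "\<not> Q a < Q b"
    then have "Q b \<le> Q a" by simp
    then have "S (Q b) \<le> S (Q a)" using Smono[of "Q b" "Q a"] Q[of b] by (cases "Q b = Q a") auto
    then show False using Q[of a] Q[of b] ab by simp
  qed
  have Qcont: "isCont Q u" for u
  proof -
    have Qu: "0 < Q u" using Q[of u] by simp
    have "isCont Q (S (Q u))"
    proof (rule isCont_inverse_function[where f=S and g=Q and x="Q u" and d="Q u / 2"])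
      show "0 < Q u / 2" using Qu by simp
      show "Q (S z) = z" if "\<bar>z - Q u\<bar> \<le> Q u / 2" for z
        using abs_le_D2[OF that] Qu by (intro QS) linarith
      show "isCont S z" if "\<bar>z - Q u\<bar> \<le> Q u / 2" for z
        using abs_le_D2[OF that] Qu by (intro Scont) linarith
    qed
    then show ?thesis using Q[of u] by simp
  qed
  define M where "M u = L (Q u)" for u
  have Mcont: "isCont M u" for u unfolding M_def using cL Qcont by (simp add: isCont_o2)
  have Mmono: "M a < M b" if "a < b" for a b
    unfolding M_def using Qmono[OF that] mL by (simp add: strict_mono_less)
  obtain P where P: "\<And>x. (P has_real_derivative M x) (at x)"
    using prim_all[of M] Mcont by blast
  define F where "F u = P (u + 1) - P u" for u
  have Fder: "(F has_real_derivative (M (u + 1) - M u)) (at u)" for u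
  proof -
    have "((\<lambda>u. P (u + 1)) has_real_derivative M (u + 1)) (at u)"
      using P[of "u+1"] by (simp add: DERIV_shift)
    then show ?thesis unfolding F_def by (rule DERIV_diff[OF _ P])
  qed
  have Fb: "M u < F u \<and> F u < M (u + 1)" for u
  proof -
    obtain z where z: "u < z" "z < u + 1" "P (u+1) - P u = (u + 1 - u) * M z"
      using MVT2[of u "u+1" P M, OF _ P] by auto
    then show ?thesis using Mmono[of u z] Mmono[of z "u+1"] by (simp add: F_def)
  qed
  define \<psi> where "\<psi> r = F (S r)" for r
  define \<psi>' where "\<psi>' r = (M (S r + 1) - M (S r)) * \<sigma> r" for r
  show ?thesis
  proof (intro exI allI impI conjI)
    fix r :: real assume r: "0 < r"
    show "L r < \<psi> r" using Fb[of "S r"] QS[OF r] by (simp add: \<psi>_def M_def)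
    have "L (Q (S r + 1)) \<le> U r"
    proof (rule key[OF r])
      show "0 < Q (S r + 1)" using Q by simp
      show "i (Q (S r + 1)) \<le> r"
      proof (rule ccontr)
        assume "\<not> ?thesis"
        then have lt: "r < i (Q (S r + 1))" by simp
        have "S r < S (i (Q (S r + 1)))" using Smono[OF r lt] .
        moreover have "S (Q (S r + 1)) - S (i (Q (S r + 1))) \<ge> 2" using Sgap[of "Q (S r + 1)"] Q[of "S r + 1"] by linarith
        ultimately show False using Q[of "S r + 1"] by linarith
      qed
    qed
    then show "\<psi> r < U r" using Fb[of "S r"] by (simp add: \<psi>_def M_def)
    show "(\<psi> has_real_derivative \<psi>' r) (at r)"
      unfolding \<psi>_def \<psi>'_def using DERIV_chain2[OF Fder S[OF r]] by simp
    show "0 < \<psi>' r" unfolding \<psi>'_def using Mmono[of "S r" "S r + 1"] sigpos[OF r] by simp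
    have "isCont (\<lambda>r. S r + 1) r" using Scont[OF r] by (intro continuous_intros)
    from isCont_o2[OF this Mcont] have A: "isCont (\<lambda>r. M (S r + 1)) r" .
    have B: "isCont (\<lambda>r. M (S r)) r" using isCont_o2[OF Scont[OF r] Mcont] .
    show "isCont \<psi>' r" unfolding \<psi>'_def using isCont_mult[OF isCont_diff[OF A B] csig[OF r]] .
  qed
qed

lemma K_props:
  assumes "ext_class_K_inf f"
  shows "\<And>x. isCont f x" "strict_mono f" "f 0 = 0" "surj f"
    "\<And>y. f (inv f y) = y" "\<And>x. inv f (f x) = x"
    "\<And>a b. inv f a \<le> inv f b \<longleftrightarrow> a \<le> b" "\<And>a b. inv f a < inv f b \<longleftrightarrow> a < b"
    "\<And>y. isCont (inv f) y" "inv f 0 = 0"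
proof -
  have c: "continuous_on UNIV f" and m: "strict_mono f" and z: "f 0 = 0"
    and ua: "\<forall>M. \<exists>r. f r > M" and ub: "\<forall>M. \<exists>r. f r < M"
    using assms by (auto simp: ext_class_K_inf_def)
  show ci: "isCont f x" for x using c by (simp add: continuous_on_eq_continuous_at)
  show "strict_mono f" "f 0 = 0" by fact+
  show s: "surj f"
  proof -
    have "\<exists>x. f x = y" for y
    proof -
      obtain a where a: "f a < y" using ub by blast
      obtain b where b: "f b > y" using ua by blast
      have "a \<le> b"
      proof (rule ccontr)
        assume "\<not> a \<le> b" then have "f b < f a" using m by (simp add: strict_mono_less)
        then show False using a b by simp
      qed
      then show ?thesis using IVT[of f a y b] a b ci by force
    qed
    then show ?thesis by (metis surjI)
  qed
  show fi: "f (inv f y) = y" for y using s by (simp add: surj_f_inv_f)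
  show iff: "inv f (f x) = x" for x using m by (simp add: strict_mono_imp_inj_on)
  show "inv f a \<le> inv f b \<longleftrightarrow> a \<le> b" for a b
    using m strict_mono_less_eq[OF m, of "inv f a" "inv f b"] fi by simp
  show "inv f a < inv f b \<longleftrightarrow> a < b" for a b
    using m strict_mono_less[OF m, of "inv f a" "inv f b"] fi by simp
  show "isCont (inv f) y" for y
  proof -
    have "isCont (inv f) (f (inv f y))"
      by (rule isCont_inverse_function[where f=f and g="inv f" and x="inv f y" and d=1])
        (auto simp: iff ci)
    then show ?thesis by (simp add: fi)
  qed
  show "inv f 0 = 0" using iff[of 0] z by simp
qed

theorem lemma4:
  fixes \<phi>1 \<phi>2 :: "real \<Rightarrow> real"
  assumes "ext_class_K_inf \<phi>1" and "ext_class_K_inf \<phi>2"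
    and "\<forall>r<0. (\<phi>1 \<circ> \<phi>2) r > r"
    and "\<forall>r>0. (\<phi>1 \<circ> \<phi>2) r < r"
  shows "\<exists>\<phi>. ext_class_K_inf \<phi>
    \<and> (\<forall>r<0. inv \<phi>1 r < \<phi> r \<and> \<phi> r < \<phi>2 r)
    \<and> (\<forall>r>0. \<phi>2 r < \<phi> r \<and> \<phi> r < inv \<phi>1 r)
    \<and> (\<forall>r. r \<noteq> 0 \<longrightarrow> \<phi> differentiable (at r))
    \<and> continuous_on (UNIV - {0}) (deriv \<phi>)
    \<and> (\<forall>r. r \<noteq> 0 \<longrightarrow> deriv \<phi> r > 0)"
proof -
  note A = K_props[OF assms(1)]
  note B = K_props[OF assms(2)]
  have neg: "\<phi>1 (\<phi>2 r) > r" if "r < 0" for r using assms(3) that by simp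
  have pos: "\<phi>1 (\<phi>2 r) < r" if "r > 0" for r using assms(4) that by simp
  have m1: "\<phi>1 a < \<phi>1 b \<longleftrightarrow> a < b" "\<phi>1 a \<le> \<phi>1 b \<longleftrightarrow> a \<le> b" for a b
    using A(2) by (auto simp: strict_mono_less strict_mono_less_eq)
  have m2: "\<phi>2 a < \<phi>2 b \<longleftrightarrow> a < b" "\<phi>2 a \<le> \<phi>2 b \<longleftrightarrow> a \<le> b" for a b
    using B(2) by (auto simp: strict_mono_less strict_mono_less_eq)
  have "\<exists>\<psi> \<psi>'. \<forall>r>0. \<phi>2 r < \<psi> r \<and> \<psi> r < inv \<phi>1 r \<and> (\<psi> has_real_derivative \<psi>' r) (at r)
           \<and> \<psi>' r > 0 \<and> isCont \<psi>' r"
  proof (rule core[where i="\<lambda>t. \<phi>1 (\<phi>2 t)"])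
    show "isCont \<phi>2 x" for x by (rule B(1))
    show "strict_mono \<phi>2" by (rule B(2))
    show "isCont (\<lambda>t. \<phi>1 (\<phi>2 t)) x" for x using A(1) B(1) by (simp add: isCont_o2)
    show "strict_mono (\<lambda>t. \<phi>1 (\<phi>2 t))" by (rule strict_monoI) (simp add: m1 m2)
    show "\<phi>1 (\<phi>2 0) = 0" using A(3) B(3) by simp
    show "surj (\<lambda>t. \<phi>1 (\<phi>2 t))"
    proof (rule surjI)
      show "\<phi>1 (\<phi>2 (inv \<phi>2 (inv \<phi>1 y))) = y" for y by (simp add: A(5) B(5))
    qed
    show "\<phi>1 (\<phi>2 t) < t" if "0 < t" for t using pos that by simp
    show "\<phi>2 t \<le> inv \<phi>1 r" if "0 < r" "0 < t" "\<phi>1 (\<phi>2 t) \<le> r" for r t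
    proof -
      have "inv \<phi>1 (\<phi>1 (\<phi>2 t)) \<le> inv \<phi>1 r" using that(3) A(7) by blast
      then show ?thesis by (simp add: A(6))
    qed
  qed
  then obtain \<psi>p \<psi>p' where P: "\<And>r. 0 < r \<Longrightarrow> \<phi>2 r < \<psi>p r \<and> \<psi>p r < inv \<phi>1 r
      \<and> (\<psi>p has_real_derivative \<psi>p' r) (at r) \<and> \<psi>p' r > 0 \<and> isCont \<psi>p' r" by blast
  have "\<exists>\<psi> \<psi>'. \<forall>r>0. (\<lambda>s. - \<phi>2 (- s)) r < \<psi> r \<and> \<psi> r < (\<lambda>s. - inv \<phi>1 (- s)) r
           \<and> (\<psi> has_real_derivative \<psi>' r) (at r) \<and> \<psi>' r > 0 \<and> isCont \<psi>' r"
  proof (rule core[where i="\<lambda>t. - \<phi>1 (\<phi>2 (- t))"])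
    show "isCont (\<lambda>s. - \<phi>2 (- s)) x" for x
      by (intro continuous_intros isCont_o2[OF _ B(1)])
    show "strict_mono (\<lambda>s. - \<phi>2 (- s))" by (rule strict_monoI) (simp add: m2)
    show "isCont (\<lambda>t. - \<phi>1 (\<phi>2 (- t))) x" for x
    proof -
      have "isCont (\<lambda>t. \<phi>2 (- t)) x" by (intro continuous_intros isCont_o2[OF _ B(1)])
      then have "isCont (\<lambda>t. \<phi>1 (\<phi>2 (- t))) x" using A(1) by (rule isCont_o2)
      then show ?thesis by (rule isCont_minus)
    qed
    show "strict_mono (\<lambda>t. - \<phi>1 (\<phi>2 (- t)))" by (rule strict_monoI) (simp add: m1 m2)
    show "- \<phi>1 (\<phi>2 (- 0)) = 0" using A(3) B(3) by simp
    show "surj (\<lambda>t. - \<phi>1 (\<phi>2 (- t)))"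
    proof (rule surjI)
      show "- \<phi>1 (\<phi>2 (- (- inv \<phi>2 (inv \<phi>1 (- y))))) = y" for y by (simp add: A(5) B(5))
    qed
    show "- \<phi>1 (\<phi>2 (- t)) < t" if "0 < t" for t using neg[of "-t"] that by simp
    show "- \<phi>2 (- t) \<le> - inv \<phi>1 (- r)" if "0 < r" "0 < t" "- \<phi>1 (\<phi>2 (- t)) \<le> r" for r t
    proof -
      have "inv \<phi>1 (- r) \<le> inv \<phi>1 (\<phi>1 (\<phi>2 (- t)))" using that(3) A(7) by simp
      then show ?thesis by (simp add: A(6))
    qed
  qed
  then obtain \<psi>n \<psi>n' where N: "\<And>r. 0 < r \<Longrightarrow> - \<phi>2 (- r) < \<psi>n r \<and> \<psi>n r < - inv \<phi>1 (- r)
      \<and> (\<psi>n has_real_derivative \<psi>n' r) (at r) \<and> \<psi>n' r > 0 \<and> isCont \<psi>n' r" by auto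
  define \<phi> where "\<phi> r = (if 0 < r then \<psi>p r else if r < 0 then - \<psi>n (- r) else 0)" for r
  define D where "D r = (if 0 < r then \<psi>p' r else \<psi>n' (- r))" for r
  have bpos: "\<phi>2 r < \<phi> r \<and> \<phi> r < inv \<phi>1 r" if "0 < r" for r using P[OF that] that by (simp add: \<phi>_def)
  have bneg: "inv \<phi>1 r < \<phi> r \<and> \<phi> r < \<phi>2 r" if "r < 0" for r
    using N[of "-r"] that by (auto simp: \<phi>_def)
  have Dpos: "D r > 0" if "r \<noteq> 0" for r using P N that by (auto simp: D_def)
  have Dd: "(\<phi> has_real_derivative D r) (at r)" if "r \<noteq> 0" for r
  proof (cases "0 < r")
    case True
    have "(\<psi>p has_real_derivative D r) (at r)" using P[OF True] True by (simp add: D_def)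
    then show ?thesis
      by (rule has_field_derivative_transform_within_open[where S="{0<..}"]) (use True in \<open>auto simp: \<phi>_def\<close>)
  next
    case False
    then have r: "r < 0" using that by simp
    have "(\<psi>n has_real_derivative \<psi>n' (- r)) (at (- r))" using N[of "-r"] r by simp
    then have "((\<lambda>x. \<psi>n (- x)) has_real_derivative - \<psi>n' (- r)) (at r)" by (simp add: DERIV_mirror)
    then have "((\<lambda>x. - \<psi>n (- x)) has_real_derivative D r) (at r)"
      using DERIV_minus r by (fastforce simp: D_def)
    then show ?thesis
      by (rule has_field_derivative_transform_within_open[where S="{..<0}"]) (use r in \<open>auto simp: \<phi>_def\<close>)
  qed
  have sg: "0 < \<phi> r" if "0 < r" for r using bpos[OF that] m2(1)[of 0 r] B(3) that by simp
  have sg': "\<phi> r < 0" if "r < 0" for r using bneg[OF that] m2(1)[of r 0] B(3) that by simp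
  have z: "\<phi> 0 = 0" by (simp add: \<phi>_def)
  have cont0: "isCont \<phi> 0"
  proof -
    define g where "g r = \<bar>\<phi>2 r\<bar> + \<bar>inv \<phi>1 r\<bar>" for r
    have gc: "isCont g 0" unfolding g_def using A(9)[of 0] B(1)[of 0] by (intro continuous_intros)
    have g0: "g 0 = 0" by (simp add: g_def A(10) B(3))
    have gb: "- g r \<le> \<phi> r \<and> \<phi> r \<le> g r" for r
    proof (cases r "0::real" rule: linorder_cases)
      case less
      then show ?thesis using bneg[OF less] abs_ge_self[of "\<phi>2 r"] abs_ge_minus_self[of "inv \<phi>1 r"]
        abs_ge_zero[of "\<phi>2 r"] abs_ge_zero[of "inv \<phi>1 r"] unfolding g_def by linarith
    next
      case equal then show ?thesis by (simp add: z g_def)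
    next
      case greater
      then show ?thesis using bpos[OF greater] abs_ge_minus_self[of "\<phi>2 r"] abs_ge_self[of "inv \<phi>1 r"]
        abs_ge_zero[of "\<phi>2 r"] abs_ge_zero[of "inv \<phi>1 r"] unfolding g_def by linarith
    qed
    have t1: "(g \<longlongrightarrow> 0) (at 0)" using gc g0 by (simp add: continuous_at)
    have t2: "((\<lambda>r. - g r) \<longlongrightarrow> 0) (at 0)" using tendsto_minus[OF t1] by simp
    have "(\<phi> \<longlongrightarrow> 0) (at 0)"
      by (rule tendsto_sandwich[OF _ _ t2 t1]) (auto simp: gb)
    then show ?thesis by (simp add: continuous_at z)
  qed
  have contall: "isCont \<phi> x" for x
  proof (cases "x = 0")
    case True then show ?thesis using cont0 by simp
  next
    case False show ?thesis using DERIV_isCont[OF Dd[OF False]] .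
  qed
  have smono: "strict_mono \<phi>"
  proof (rule strict_monoI)
    fix x y :: real assume xy: "x < y"
    show "\<phi> x < \<phi> y"
    proof (cases "0 < x \<or> y < 0")
      case True
      show ?thesis
      proof (rule DERIV_pos_imp_increasing[OF xy])
        fix t assume "x \<le> t" "t \<le> y"
        then have "t \<noteq> 0" using True by auto
        then show "\<exists>d. (\<phi> has_real_derivative d) (at t) \<and> 0 < d" using Dd Dpos by blast
      qed
    next
      case False
      then have "x \<le> 0" "0 \<le> y" by auto
      then show ?thesis using sg sg' z xy
        by (cases "x < 0"; cases "0 < y") (auto, fastforce+)
    qed
  qed
  have ua: "\<exists>r. \<phi> r > M" for M
  proof -
    obtain r where r: "\<phi>2 r > \<bar>M\<bar>" using assms(2) by (auto simp: ext_class_K_inf_def)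
    have "0 < r"
    proof (rule ccontr)
      assume "\<not> 0 < r" then have "\<phi>2 r \<le> \<phi>2 0" using m2(2) by simp
      then show False using r B(3) by simp
    qed
    then show ?thesis using bpos r by (intro exI[of _ r]) (smt (verit) abs_ge_self)
  qed
  have ub: "\<exists>r. \<phi> r < M" for M
  proof -
    obtain r where r: "\<phi>2 r < - \<bar>M\<bar>" using assms(2) by (auto simp: ext_class_K_inf_def)
    have "r < 0"
    proof (rule ccontr)
      assume "\<not> r < 0" then have "\<phi>2 0 \<le> \<phi>2 r" using m2(2) by simp
      then show False using r B(3) by simp
    qed
    then show ?thesis using bneg r by (intro exI[of _ r]) (smt (verit) abs_ge_minus_self)
  qed
  have K: "ext_class_K_inf \<phi>"
    unfolding ext_class_K_inf_def
    using contall smono z ua ub by (auto intro: continuous_at_imp_continuous_on)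
  have der: "deriv \<phi> r = D r" if "r \<noteq> 0" for r using Dd[OF that] by (rule DERIV_imp_deriv)
  have diff: "\<phi> differentiable (at r)" if "r \<noteq> 0" for r
    using Dd[OF that] unfolding has_field_derivative_def differentiable_def by blast
  have Dcont: "isCont D r" if "r \<noteq> 0" for r
  proof (cases "0 < r")
    case True
    have ev: "eventually (\<lambda>x. D x = \<psi>p' x) (nhds r)"
      using eventually_nhds_in_open[of "{0<..}" r] True by (auto elim!: eventually_mono simp: D_def)
    show ?thesis using isCont_cong[OF ev] P[OF True] by simp
  next
    case False
    then have r: "r < 0" using that by simp
    have ev: "eventually (\<lambda>x. D x = \<psi>n' (- x)) (nhds r)"
      using eventually_nhds_in_open[of "{..<0}" r] r by (auto elim!: eventually_mono simp: D_def)
    have "isCont (\<lambda>x. \<psi>n' (- x)) r"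
      using N[of "-r"] r by (intro isCont_o2[where f=uminus and g="\<psi>n'"]) (auto intro: continuous_intros)
    then show ?thesis using isCont_cong[OF ev] by simp
  qed
  have dcont: "continuous_on (UNIV - {0}) (deriv \<phi>)"
  proof (rule continuous_at_imp_continuous_on, intro ballI)
    fix r :: real assume "r \<in> UNIV - {0}"
    then have r: "r \<noteq> 0" by simp
    have ev: "eventually (\<lambda>x. deriv \<phi> x = D x) (nhds r)"
      using t1_space_nhds[OF r] by (auto elim!: eventually_mono simp: der)
    show "isCont (deriv \<phi>) r" using isCont_cong[OF ev] Dcont[OF r] by simp
  qed
  show ?thesis
    using K bpos bneg diff dcont der Dpos by (intro exI[of _ \<phi>]) auto
qed

end
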